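(* Let $\mathbb P$ be a Bernoulli measure on $\partial\mathcal M$, $f(x)=\mathbb P({\uparrow}x)$ for $x\in\mathcal M$, and let $B=(B_{\gamma,\gamma'})_{\gamma,\gamma'\in\mathfrak C}$ be the non-negative matrix with $B_{\gamma,\gamma'}=f(\gamma')$ if $\gamma\to\gamma'$ and $B_{\gamma,\gamma'}=0$ otherwise. Then the spectral radius of $B$ equals $1$.
   Context: Let $\Sigma$ be a finite set with at least two elements and $I\subseteq\Sigma\times\Sigma$ a symmetric irreflexive relation such that $(\Sigma,(\Sigma\times\Sigma)\setminus I)$ is connected. The heap monoid $\mathcal M=\mathcal M(\Sigma,I)$ is $\Sigma^*$ modulo the smallest congruence containing $(ab,ba)$ for $(a,b)\in I$; $\cdot$ is concatenation, $0$ the empty heap. $x\le y$ iff $y=x\cdot z$ for some $z$. Cliques are heaps formed by distinct pairwise independent pieces; $\mathfrak C$ the nonempty ones; $\gamma\to\gamma'$ iff each piece of $\gamma'$ is dependent (not in $I$) on some piece of $\gamma$. Every nonempty heap has a unique Cartier–Foata decomposition $\gamma_1\cdots\gamma_n$ with $\gamma_i\in\mathfrak C$, $\gamma_i\to\gamma_{i+1}$. The boundary $\partial\mathcal M$ is the set of infinite sequences $(\gamma_n)_{n\ge1}$ of nonempty cliques with $\gamma_n\to\gamma_{n+1}$, ordered together with $\mathcal M$ by $\xi\le\xi'$ iff $\gamma_1\cdots\gamma_n\le\gamma'_1\cdots\gamma'_n$ for all $n$ (finite heaps padded with empty cliques). ${\uparrow}x=\{\xi\in\partial\mathcal M:x\le\xi\}$;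 $\mathcal F$ the generated $\sigma$-algebra. A Bernoulli measure is a probability $\mathbb P$ on $(\partial\mathcal M,\mathcal F)$ with $\mathbb P({\uparrow}(x\cdot y))=\mathbb P({\uparrow}x)\mathbb P({\uparrow}y)$ and $\mathbb P({\uparrow}x)>0$ for all $x,y$. *)

theory Defs
  imports "HOL-Probability.Probability" "Jordan_Normal_Form.Spectral_Radius"
begin

inductive teq :: "('a \<times> 'a) set \<Rightarrow> 'a list \<Rightarrow> 'a list \<Rightarrow> bool" for I where
  teq_refl: "teq I w w"
| teq_swap: "(a, b) \<in> I \<Longrightarrow> teq I (u @ [a, b] @ v) (u @ [b, a] @ v)"
| teq_sym: "teq I u v \<Longrightarrow> teq I v u"
| teq_trans: "teq I u v \<Longrightarrow> teq I v w \<Longrightarrow> teq I u w"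

definition heap :: "('a \<times> 'a) set \<Rightarrow> 'a list \<Rightarrow> 'a list set" where
  "heap I w = {v. teq I w v}"

definition heaps :: "'a set \<Rightarrow> ('a \<times> 'a) set \<Rightarrow> 'a list set set" where
  "heaps S I = heap I ` lists S"

definition hcat :: "('a \<times> 'a) set \<Rightarrow> 'a list set \<Rightarrow> 'a list set \<Rightarrow> 'a list set" where
  "hcat I x y = {w. \<exists>u\<in>x. \<exists>v\<in>y. teq I (u @ v) w}"

definition hempty :: "('a \<times> 'a) set \<Rightarrow> 'a list set" where
  "hempty I = heap I []"

definition hprod :: "('a \<times> 'a) set \<Rightarrow> 'a list set list \<Rightarrow> 'a list set" where
  "hprod I xs = foldr (hcat I) xs (hempty I)"

definition hle :: "'a set \<Rightarrow> ('a \<times> 'a) set \<Rightarrow> 'a list set \<Rightarrow> 'a list set \<Rightarrow> bool" where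
  "hle S I x y \<longleftrightarrow> (\<exists>z \<in> heaps S I. y = hcat I x z)"

definition pieces :: "'a list set \<Rightarrow> 'a set" where
  "pieces x = \<Union> (set ` x)"

definition cliques :: "'a set \<Rightarrow> ('a \<times> 'a) set \<Rightarrow> 'a list set set" where
  "cliques S I = {heap I l | l. l \<in> lists S \<and> l \<noteq> [] \<and> distinct l \<and>
      (\<forall>a\<in>set l. \<forall>b\<in>set l. a \<noteq> b \<longrightarrow> (a, b) \<in> I)}"

definition arrow :: "('a \<times> 'a) set \<Rightarrow> 'a list set \<Rightarrow> 'a list set \<Rightarrow> bool" where
  "arrow I c c' \<longleftrightarrow> (\<forall>b\<in>pieces c'. \<exists>a\<in>pieces c. (a, b) \<notin> I)"

text \<open>Cartier--Foata decomposition (the unique one; empty list for the empty heap).\<close>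
definition cf :: "'a set \<Rightarrow> ('a \<times> 'a) set \<Rightarrow> 'a list set \<Rightarrow> 'a list set list" where
  "cf S I x = (THE cs. set cs \<subseteq> cliques S I \<and> successively (arrow I) cs \<and> hprod I cs = x)"

definition cf_pad :: "'a set \<Rightarrow> ('a \<times> 'a) set \<Rightarrow> 'a list set \<Rightarrow> nat \<Rightarrow> 'a list set" where
  "cf_pad S I x n = (if n < length (cf S I x) then cf S I x ! n else hempty I)"

definition boundary :: "'a set \<Rightarrow> ('a \<times> 'a) set \<Rightarrow> (nat \<Rightarrow> 'a list set) set" where
  "boundary S I = {g. (\<forall>n. g n \<in> cliques S I) \<and> (\<forall>n. arrow I (g n) (g (Suc n)))}"

text \<open>Up-set of a heap x in the boundary: x \<le> xi iff the products of the first n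
cliques compare for all n (x padded with empty cliques).\<close>
definition up :: "'a set \<Rightarrow> ('a \<times> 'a) set \<Rightarrow> 'a list set \<Rightarrow> (nat \<Rightarrow> 'a list set) set" where
  "up S I x = {xi \<in> boundary S I. \<forall>n.
      hle S I (hprod I (map (cf_pad S I x) [0..<n])) (hprod I (map xi [0..<n]))}"

definition bernoulli :: "'a set \<Rightarrow> ('a \<times> 'a) set \<Rightarrow> (nat \<Rightarrow> 'a list set) measure \<Rightarrow> bool" where
  "bernoulli S I P \<longleftrightarrow> prob_space P \<and> space P = boundary S I \<and>
     sets P = sigma_sets (boundary S I) (up S I ` heaps S I) \<and>
     (\<forall>x\<in>heaps S I. \<forall>y\<in>heaps S I.
        measure P (up S I (hcat I x y)) = measure P (up S I x) * measure P (up S I y)) \<and>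
     (\<forall>x\<in>heaps S I. measure P (up S I x) > 0)"

text \<open>A fixed enumeration of the (finitely many) nonempty cliques; the spectral radius
of the matrix B does not depend on the choice of enumeration.\<close>
definition clique_enum :: "'a set \<Rightarrow> ('a \<times> 'a) set \<Rightarrow> 'a list set list" where
  "clique_enum S I = (SOME l. distinct l \<and> set l = cliques S I)"

definition Bmat :: "'a set \<Rightarrow> ('a \<times> 'a) set \<Rightarrow> (nat \<Rightarrow> 'a list set) measure \<Rightarrow> complex mat" where
  "Bmat S I P = (let cs = clique_enum S I in
     mat (length cs) (length cs) (\<lambda>(i, j).
       if arrow I (cs ! i) (cs ! j) then complex_of_real (measure P (up S I (cs ! j))) else 0))"

end

theory Submission
  imports Defs
begin



definition indep :: "('a \<times> 'a) set \<Rightarrow> 'a set \<Rightarrow> bool" where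
  "indep I c \<longleftrightarrow> (\<forall>a\<in>c. \<forall>b\<in>c. a \<noteq> b \<longrightarrow> (a,b) \<in> I)"
definition CS :: "'a set \<Rightarrow> ('a \<times> 'a) set \<Rightarrow> 'a set set" where
  "CS S I = {c. c \<subseteq> S \<and> c \<noteq> {} \<and> indep I c}"
definition Dp :: "'a set \<Rightarrow> ('a \<times> 'a) set \<Rightarrow> 'a set \<Rightarrow> 'a set" where
  "Dp S I c = {b\<in>S. \<exists>a\<in>c. (a,b) \<notin> I}"
definition Rp :: "'a set \<Rightarrow> ('a \<times> 'a) set \<Rightarrow> 'a set \<Rightarrow> 'a set" where
  "Rp S I c = {b\<in>S. \<forall>a\<in>c. (a,b) \<in> I}"

lemma finite_CS: "finite S \<Longrightarrow> finite (CS S I)"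
  by (rule finite_subset[of _ "Pow S"]) (auto simp: CS_def)

lemma pow_alt: assumes fX: "finite X" shows "(\<Sum>A\<in>Pow X. (-1::real)^card A) = (if X = {} then 1 else 0)"
proof -
  have "(\<Sum>A\<in>Pow X. (-1::real)^card A) = 0^card X"
    using prod_diff_conv_sum[OF fX, of "\<lambda>_. 1::real" "\<lambda>_. 1"] by simp
  with fX show ?thesis by (cases "X = {}") (auto simp: card_gt_0_iff)
qed

lemma mob:
  fixes q :: "'a set \<Rightarrow> real"
  assumes fin: "finite S" and T: "T \<subseteq> S"
  shows "(\<Sum>A\<in>{A. A \<subseteq> T \<and> indep I A}. (-1)^card A * (\<Sum>c\<in>{c\<in>CS S I. A \<union> \<beta> \<subseteq> c}. q c))
        = (\<Sum>c\<in>{c\<in>CS S I. \<beta> \<subseteq> c \<and> c \<inter> T = {}}. q c)"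
proof -
  have fCS: "finite (CS S I)" using fin by (rule finite_CS)
  have fT: "finite T" using fin T finite_subset by blast
  have fA: "finite {A. A \<subseteq> T \<and> indep I A}"
    by (rule finite_subset[of _ "Pow T"]) (use fT in auto)
  have "(\<Sum>A\<in>{A. A \<subseteq> T \<and> indep I A}. (-1)^card A * (\<Sum>c\<in>{c\<in>CS S I. A \<union> \<beta> \<subseteq> c}. q c))
      = (\<Sum>A\<in>{A. A \<subseteq> T \<and> indep I A}. \<Sum>c\<in>CS S I. if A \<union> \<beta> \<subseteq> c then (-1)^card A * q c else 0)"
    by (simp add: sum.inter_filter[OF fCS] sum_distrib_left if_distrib cong: if_cong)
  also have "\<dots> = (\<Sum>c\<in>CS S I. \<Sum>A\<in>{A. A \<subseteq> T \<and> indep I A}. if A \<union> \<beta> \<subseteq> c then (-1)^card A * q c else 0)"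
    by (rule sum.swap)
  also have "\<dots> = (\<Sum>c\<in>CS S I. if \<beta> \<subseteq> c \<and> c \<inter> T = {} then q c else 0)"
  proof (rule sum.cong[OF refl])
    fix c assume c: "c \<in> CS S I"
    show "(\<Sum>A\<in>{A. A \<subseteq> T \<and> indep I A}. if A \<union> \<beta> \<subseteq> c then (-1)^card A * q c else 0)
          = (if \<beta> \<subseteq> c \<and> c \<inter> T = {} then q c else 0)"
    proof (cases "\<beta> \<subseteq> c")
      case False
      then show ?thesis by auto
    next
      case True
      have "(\<Sum>A\<in>{A. A \<subseteq> T \<and> indep I A}. if A \<union> \<beta> \<subseteq> c then (-1)^card A * q c else 0)
          = (\<Sum>A\<in>{A\<in>{A. A \<subseteq> T \<and> indep I A}. A \<subseteq> c}. (-1)^card A * q c)"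
        using True by (subst sum.inter_filter[OF fA]) (auto intro!: sum.cong)
      also have "{A\<in>{A. A \<subseteq> T \<and> indep I A}. A \<subseteq> c} = Pow (T \<inter> c)"
      proof (intro equalityI subsetI)
        fix A assume "A \<in> {A\<in>{A. A \<subseteq> T \<and> indep I A}. A \<subseteq> c}"
        then show "A \<in> Pow (T \<inter> c)" by auto
      next
        fix A assume A: "A \<in> Pow (T \<inter> c)"
        have "indep I c" using c by (simp add: CS_def)
        then have "indep I A" using A unfolding indep_def by blast
        then show "A \<in> {A\<in>{A. A \<subseteq> T \<and> indep I A}. A \<subseteq> c}" using A by auto
      qed
      also have "(\<Sum>A\<in>Pow (T \<inter> c). (-1)^card A * q c) = (\<Sum>A\<in>Pow (T \<inter> c). (-1::real)^card A) * q c"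
        by (simp add: sum_distrib_right)
      also have "\<dots> = (if T \<inter> c = {} then q c else 0)"
        using pow_alt[of "T \<inter> c"] fT by simp
      finally show ?thesis using True by (auto simp: Int_commute)
    qed
  qed
  also have "\<dots> = (\<Sum>c\<in>{c\<in>CS S I. \<beta> \<subseteq> c \<and> c \<inter> T = {}}. q c)"
    by (simp add: sum.inter_filter[OF fCS])
  finally show ?thesis .
qed

lemma crossing:
  assumes "(g, v) \<in> R\<^sup>*" "g \<in> D"
  shows "v \<in> D \<or> (\<exists>w u. (w,u) \<in> R \<and> w \<in> D \<and> u \<notin> D)"
  using assms by (induction rule: rtrancl_induct) auto

lemma comb_main:
  fixes q F X :: "'a set \<Rightarrow> real"
  assumes fin: "finite S" and symI: "sym I" and irr: "\<forall>a. (a,a) \<notin> I"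
   and conn: "\<forall>a\<in>S. \<forall>b\<in>S. (a,b) \<in> ((S\<times>S) - I)\<^sup>*"
   and q0: "\<forall>c\<in>CS S I. q c \<ge> 0" and qsum: "(\<Sum>c\<in>CS S I. q c) = 1"
   and Fdef: "\<And>c. F c = (\<Sum>c'\<in>{c'\<in>CS S I. c \<subseteq> c'}. q c')"
   and Fpos: "\<forall>c\<in>CS S I. F c > 0"
   and Fmul: "\<forall>\<gamma>\<in>CS S I. \<forall>A\<in>CS S I. A \<subseteq> Rp S I \<gamma> \<longrightarrow> F (\<gamma> \<union> A) = F \<gamma> * F A"
   and Xdef: "\<And>\<gamma>. X \<gamma> = (\<Sum>c\<in>{c\<in>CS S I. c \<subseteq> Dp S I \<gamma>}. q c)"
  shows "\<forall>\<gamma>\<in>CS S I. X \<gamma> > 0"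
    and "\<forall>\<gamma>\<in>CS S I. (\<Sum>\<gamma>'\<in>{\<gamma>'\<in>CS S I. \<gamma>' \<subseteq> Dp S I \<gamma>}. F \<gamma>' * X \<gamma>') = X \<gamma>"
proof -
  have fCS: "finite (CS S I)" using fin by (rule finite_CS)
  have F0: "F {} = 1" using qsum by (simp add: Fdef)
  have qfx: "q \<gamma> = F \<gamma> * X \<gamma>" if g: "\<gamma> \<in> CS S I" for \<gamma>
  proof -
    let ?R = "Rp S I \<gamma>"
    have RS: "?R \<subseteq> S" by (auto simp: Rp_def)
    have s1: "{c\<in>CS S I. \<gamma> \<subseteq> c \<and> c \<inter> ?R = {}} = {\<gamma>}"
    proof -
      have "c = \<gamma>" if c: "c \<in> CS S I" "\<gamma> \<subseteq> c" "c \<inter> ?R = {}" for c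
      proof (rule ccontr)
        assume "c \<noteq> \<gamma>"
        then obtain b where b: "b \<in> c" "b \<notin> \<gamma>" using c by auto
        have "b \<in> ?R" using b c g by (auto simp: Rp_def CS_def indep_def)
        then show False using b c by auto
      qed
      moreover have "\<gamma> \<inter> ?R = {}" using irr by (auto simp: Rp_def)
      ultimately show ?thesis using g by auto
    qed
    have "q \<gamma> = (\<Sum>c\<in>{c\<in>CS S I. \<gamma> \<subseteq> c \<and> c \<inter> ?R = {}}. q c)" unfolding s1 by simp
    also have "\<dots> = (\<Sum>A\<in>{A. A \<subseteq> ?R \<and> indep I A}. (-1)^card A * (\<Sum>c\<in>{c\<in>CS S I. A \<union> \<gamma> \<subseteq> c}. q c))"
      by (rule mob[OF fin RS, symmetric])
    also have "\<dots> = (\<Sum>A\<in>{A. A \<subseteq> ?R \<and> indep I A}. (-1)^card A * (F \<gamma> * F A))"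
    proof (rule sum.cong[OF refl])
      fix A assume A: "A \<in> {A. A \<subseteq> ?R \<and> indep I A}"
      have "(\<Sum>c\<in>{c\<in>CS S I. A \<union> \<gamma> \<subseteq> c}. q c) = F (\<gamma> \<union> A)" by (simp add: Fdef Un_commute)
      also have "\<dots> = F \<gamma> * F A"
      proof (cases "A = {}")
        case True then show ?thesis using F0 by simp
      next
        case False
        then have "A \<in> CS S I" using A RS by (auto simp: CS_def)
        then show ?thesis using Fmul g A by auto
      qed
      finally show "(-1)^card A * (\<Sum>c\<in>{c\<in>CS S I. A \<union> \<gamma> \<subseteq> c}. q c) = (-1)^card A * (F \<gamma> * F A)"
        by simp
    qed
    also have "\<dots> = F \<gamma> * (\<Sum>A\<in>{A. A \<subseteq> ?R \<and> indep I A}. (-1)^card A * F A)"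
      by (simp add: sum_distrib_left mult.left_commute)
    also have "\<dots> = F \<gamma> * (\<Sum>A\<in>{A. A \<subseteq> ?R \<and> indep I A}. (-1)^card A * (\<Sum>c\<in>{c\<in>CS S I. A \<union> {} \<subseteq> c}. q c))"
      by (simp only: Fdef Un_empty_right)
    also have "\<dots> = F \<gamma> * (\<Sum>c\<in>{c\<in>CS S I. {} \<subseteq> c \<and> c \<inter> ?R = {}}. q c)"
      using mob[OF fin RS, where \<beta>="{}" and q=q and I=I] by simp
    also have "{c\<in>CS S I. {} \<subseteq> c \<and> c \<inter> ?R = {}} = {c\<in>CS S I. c \<subseteq> Dp S I \<gamma>}"
      by (auto simp: CS_def Rp_def Dp_def)
    finally show ?thesis by (simp add: Xdef)
  qed
  have eig: "(\<Sum>\<gamma>'\<in>{\<gamma>'\<in>CS S I. \<gamma>' \<subseteq> Dp S I \<gamma>}. F \<gamma>' * X \<gamma>') = X \<gamma>" for \<gamma>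
  proof -
    have "(\<Sum>\<gamma>'\<in>{\<gamma>'\<in>CS S I. \<gamma>' \<subseteq> Dp S I \<gamma>}. F \<gamma>' * X \<gamma>') = (\<Sum>\<gamma>'\<in>{\<gamma>'\<in>CS S I. \<gamma>' \<subseteq> Dp S I \<gamma>}. q \<gamma>')"
      by (rule sum.cong[OF refl]) (metis (mono_tags, lifting) mem_Collect_eq qfx)
    then show ?thesis by (simp only: Xdef)
  qed
  then show "\<forall>\<gamma>\<in>CS S I. (\<Sum>\<gamma>'\<in>{\<gamma>'\<in>CS S I. \<gamma>' \<subseteq> Dp S I \<gamma>}. F \<gamma>' * X \<gamma>') = X \<gamma>" by auto
  have Xnn: "X \<gamma> \<ge> 0" for \<gamma> unfolding Xdef by (rule sum_nonneg) (use q0 in auto)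
  have zp: "X \<gamma>' = 0" if "X \<gamma> = 0" "\<gamma>' \<in> CS S I" "\<gamma>' \<subseteq> Dp S I \<gamma>" for \<gamma> \<gamma>'
  proof -
    have fs: "finite {\<gamma>'\<in>CS S I. \<gamma>' \<subseteq> Dp S I \<gamma>}" using fCS by auto
    have s0: "(\<Sum>\<gamma>'\<in>{\<gamma>'\<in>CS S I. \<gamma>' \<subseteq> Dp S I \<gamma>}. F \<gamma>' * X \<gamma>') = 0" using eig that(1) by simp
    have nn: "\<And>x. x \<in> {\<gamma>'\<in>CS S I. \<gamma>' \<subseteq> Dp S I \<gamma>} \<Longrightarrow> 0 \<le> F x * X x"
    proof -
      fix x assume "x \<in> {\<gamma>'\<in>CS S I. \<gamma>' \<subseteq> Dp S I \<gamma>}"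
      then have "F x > 0" using Fpos by auto
      then show "0 \<le> F x * X x" using Xnn[of x] by simp
    qed
    have all: "\<forall>x\<in>{\<gamma>'\<in>CS S I. \<gamma>' \<subseteq> Dp S I \<gamma>}. F x * X x = 0"
      using sum_nonneg_eq_0_iff[OF fs nn] s0 by simp
    then have "F \<gamma>' * X \<gamma>' = 0" using that(2,3) by simp
    moreover have "F \<gamma>' > 0" using Fpos that(2) by simp
    ultimately show ?thesis by simp
  qed
  have maxi: "X \<gamma> = 1" if "S \<subseteq> Dp S I \<gamma>" for \<gamma>
  proof -
    have "{c\<in>CS S I. c \<subseteq> Dp S I \<gamma>} = CS S I" using that by (auto simp: CS_def)
    then show ?thesis using qsum by (simp add: Xdef)
  qed
  have grow: "\<exists>\<gamma>1\<in>CS S I. \<gamma>1 \<subseteq> Dp S I \<gamma> \<and> (\<exists>u. u \<in> S \<and> u \<notin> \<gamma> \<and> insert u \<gamma> \<in> CS S I \<and> insert u \<gamma> \<subseteq> Dp S I \<gamma>1)"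
    if g: "\<gamma> \<in> CS S I" and nm: "\<not> S \<subseteq> Dp S I \<gamma>" for \<gamma>
  proof -
    obtain u where u: "u \<in> S" "u \<notin> Dp S I \<gamma>" using nm by auto
    obtain g0 where g0: "g0 \<in> \<gamma>" using g by (auto simp: CS_def)
    have g0D: "g0 \<in> Dp S I \<gamma>" using g0 g irr by (auto simp: CS_def Dp_def)
    have "(g0, u) \<in> ((S\<times>S) - I)\<^sup>*" using conn g0 g u by (auto simp: CS_def)
    from crossing[OF this g0D] u obtain w u' where
      wu: "(w,u') \<in> (S\<times>S) - I" "w \<in> Dp S I \<gamma>" "u' \<notin> Dp S I \<gamma>" by blast
    have u'S: "u' \<in> S" and wS: "w \<in> S" and wuI: "(w,u') \<notin> I" using wu by auto
    have u'I: "\<forall>a\<in>\<gamma>. (a,u') \<in> I" using wu u'S by (auto simp: Dp_def)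
    have gD: "\<gamma> \<subseteq> Dp S I \<gamma>" using g irr by (auto simp: CS_def Dp_def)
    define \<gamma>1 where "\<gamma>1 = insert w {a\<in>\<gamma>. (w,a) \<in> I}"
    have "\<gamma>1 \<in> CS S I" using g wS symI unfolding \<gamma>1_def CS_def indep_def
      by (auto dest: symD)
    moreover have "\<gamma>1 \<subseteq> Dp S I \<gamma>" using wu gD unfolding \<gamma>1_def by auto
    moreover have "u' \<notin> \<gamma>" using gD wu by auto
    moreover have "insert u' \<gamma> \<in> CS S I" using g u'S u'I symI unfolding CS_def indep_def
      by (auto dest: symD)
    moreover have "insert u' \<gamma> \<subseteq> Dp S I \<gamma>1"
    proof
      fix b assume b: "b \<in> insert u' \<gamma>"
      show "b \<in> Dp S I \<gamma>1"
      proof (cases "b = u'")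
        case True then show ?thesis using u'S wuI unfolding Dp_def \<gamma>1_def by auto
      next
        case False
        then have "b \<in> \<gamma>" using b by auto
        then show ?thesis using g irr unfolding Dp_def \<gamma>1_def CS_def by auto
      qed
    qed
    ultimately show ?thesis using u'S by blast
  qed
  have nz: "\<forall>\<gamma>. \<gamma> \<in> CS S I \<longrightarrow> card (S - \<gamma>) = n \<longrightarrow> X \<gamma> \<noteq> 0" for n
  proof (induction n rule: less_induct)
    case (less n)
    show ?case
    proof (intro allI impI)
      fix \<gamma> assume g: "\<gamma> \<in> CS S I" and n: "card (S - \<gamma>) = n"
      show "X \<gamma> \<noteq> 0"
      proof (cases "S \<subseteq> Dp S I \<gamma>")
        case True then show ?thesis using maxi by simp
      next
        case False
        from grow[OF g False] obtain \<gamma>1 u where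
          h: "\<gamma>1 \<in> CS S I" "\<gamma>1 \<subseteq> Dp S I \<gamma>" "u \<in> S" "u \<notin> \<gamma>" "insert u \<gamma> \<in> CS S I"
             "insert u \<gamma> \<subseteq> Dp S I \<gamma>1" by blast
        have "card (S - insert u \<gamma>) < card (S - \<gamma>)"
          using h fin by (intro psubset_card_mono) auto
        then have "X (insert u \<gamma>) \<noteq> 0" using less n h by auto
        then show ?thesis using zp h by metis
      qed
    qed
  qed
  show "\<forall>\<gamma>\<in>CS S I. X \<gamma> > 0" using nz Xnn by (metis less_eq_real_def)
qed




lemma teq_mset: "teq I u v \<Longrightarrow> mset u = mset v"
  by (induction rule: teq.induct) auto

lemma teq_set: "teq I u v \<Longrightarrow> set u = set v"
  by (metis teq_mset set_mset_mset)

lemma teq_app: "teq I u v \<Longrightarrow> teq I (p @ u @ s) (p @ v @ s)"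
proof (induction rule: teq.induct)
  case (teq_refl w) then show ?case by (rule teq.teq_refl)
next
  case (teq_swap a b u v)
  then show ?case using teq.teq_swap[of a b I "p@u" "v@s"] by simp
next
  case (teq_sym u v) show ?case using teq_sym.IH by (rule teq.teq_sym)
next
  case (teq_trans u v w) then show ?case by (metis teq.teq_trans)
qed

lemma teq_app_r: "teq I u v \<Longrightarrow> teq I (u @ s) (v @ s)"
  using teq_app[of I u v "[]" s] by simp
lemma teq_app_l: "teq I u v \<Longrightarrow> teq I (p @ u) (p @ v)"
  using teq_app[of I u v p "[]"] by simp

lemma heap_eq: "heap I u = heap I v \<longleftrightarrow> teq I u v"
proof
  assume "heap I u = heap I v"
  moreover have "v \<in> heap I v" by (simp add: heap_def teq_refl)
  ultimately have "v \<in> heap I u" by simp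
  then show "teq I u v" by (simp add: heap_def)
next
  assume h: "teq I u v"
  show "heap I u = heap I v"
    unfolding heap_def using h by (auto intro: teq_trans teq_sym)
qed

lemma hcat_heap: "hcat I (heap I u) (heap I v) = heap I (u @ v)"
  unfolding hcat_def heap_def
proof (intro equalityI subsetI)
  fix w assume "w \<in> {w. \<exists>u'\<in>{v. teq I u v}. \<exists>v'\<in>{va. teq I v va}. teq I (u' @ v') w}"
  then obtain u' v' where "teq I u u'" "teq I v v'" "teq I (u' @ v') w" by auto
  then have "teq I (u @ v) (u' @ v')"
    by (meson teq_app_l teq_app_r teq_trans)
  then show "w \<in> {va. teq I (u @ v) va}" using \<open>teq I (u' @ v') w\<close> by (auto intro: teq_trans)
next
  fix w assume "w \<in> {va. teq I (u @ v) va}"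
  then show "w \<in> {w. \<exists>u'\<in>{v. teq I u v}. \<exists>v'\<in>{va. teq I v va}. teq I (u' @ v') w}"
    by (auto intro: teq_refl)
qed

lemma pieces_heap: "pieces (heap I u) = set u"
  unfolding pieces_def heap_def using teq_set[of I u] by (auto intro: teq_refl)

lemma teq_move: "\<forall>y\<in>set ys. (x,y) \<in> I \<Longrightarrow> teq I (x # ys @ zs) (ys @ x # zs)"
proof (induction ys)
  case Nil then show ?case by (simp add: teq_refl)
next
  case (Cons y ys)
  have 1: "teq I (x # y # ys @ zs) (y # x # ys @ zs)"
    using teq_swap[of x y I "[]" "ys @ zs"] Cons.prems by simp
  have "teq I (x # ys @ zs) (ys @ x # zs)" using Cons by simp
  then have 2: "teq I (y # x # ys @ zs) (y # ys @ x # zs)"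
    using teq_app_l[of I _ _ "[y]"] by simp
  show ?case using teq_trans[OF 1 2] by simp
qed

lemma teq_perm: "distinct l \<Longrightarrow> distinct l' \<Longrightarrow> set l = set l' \<Longrightarrow> indep I (set l) \<Longrightarrow> teq I l l'"
proof (induction l arbitrary: l')
  case Nil then show ?case by (simp add: teq_refl)
next
  case (Cons x xs)
  have "x \<in> set l'" using Cons.prems by auto
  then obtain ys zs where l': "l' = ys @ x # zs" by (meson split_list)
  have nx: "x \<notin> set ys" "x \<notin> set zs" using Cons.prems(2) l' by auto
  have sx: "set xs = set (ys @ zs)" using Cons.prems nx l' by auto
  have "teq I xs (ys @ zs)"
    using Cons.prems l' sx by (intro Cons.IH) (auto simp: indep_def)
  then have 1: "teq I (x # xs) (x # ys @ zs)" using teq_app_l[of I _ _ "[x]"] by simp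
  have "\<forall>y\<in>set ys. (x,y) \<in> I" using Cons.prems nx l' unfolding indep_def by auto
  from teq_move[OF this] have 2: "teq I (x # ys @ zs) (ys @ x # zs)" .
  show ?case using teq_trans[OF 1 2] l' by simp
qed

definition lof :: "'a set \<Rightarrow> 'a list" where "lof c = (SOME l. distinct l \<and> set l = c)"
definition cl :: "('a \<times> 'a) set \<Rightarrow> 'a set \<Rightarrow> 'a list set" where "cl I c = heap I (lof c)"

lemma lof: "finite c \<Longrightarrow> distinct (lof c) \<and> set (lof c) = c"
  unfolding lof_def by (metis (mono_tags, lifting) finite_distinct_list someI_ex)

lemma pieces_cl: "finite c \<Longrightarrow> pieces (cl I c) = c"
  by (simp add: cl_def pieces_heap lof)

lemma heap_cl: "distinct l \<Longrightarrow> indep I (set l) \<Longrightarrow> heap I l = cl I (set l)"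
  unfolding cl_def heap_eq using lof[of "set l"] by (intro teq_perm) auto

lemma cliques_iff: "h \<in> cliques S I \<longleftrightarrow> (\<exists>c\<in>CS S I. h = cl I c)" if fin: "finite S"
proof
  assume "h \<in> cliques S I"
  then obtain l where l: "h = heap I l" "l \<in> lists S" "l \<noteq> []" "distinct l"
    "\<forall>a\<in>set l. \<forall>b\<in>set l. a \<noteq> b \<longrightarrow> (a, b) \<in> I" unfolding cliques_def by auto
  then have "set l \<in> CS S I" by (auto simp: CS_def indep_def)
  moreover have "h = cl I (set l)" using l heap_cl[of l I] by (auto simp: indep_def)
  ultimately show "\<exists>c\<in>CS S I. h = cl I c" by auto
next
  assume "\<exists>c\<in>CS S I. h = cl I c"
  then obtain c where c: "c \<in> CS S I" "h = cl I c" by auto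
  have fc: "finite c" using c fin finite_subset by (auto simp: CS_def)
  have "h = heap I (lof c) \<and> lof c \<in> lists S \<and> lof c \<noteq> [] \<and> distinct (lof c) \<and>
      (\<forall>a\<in>set (lof c). \<forall>b\<in>set (lof c). a \<noteq> b \<longrightarrow> (a, b) \<in> I)"
    using c lof[OF fc] by (auto simp: CS_def indep_def cl_def)
  then show "h \<in> cliques S I" unfolding cliques_def by blast
qed

lemma hcat_cl:
  assumes "finite c" "finite A" "c \<inter> A = {}" "indep I (c \<union> A)"
  shows "hcat I (cl I c) (cl I A) = cl I (c \<union> A)"
  unfolding cl_def hcat_heap heap_eq using assms lof[of c] lof[of A] lof[of "c \<union> A"]
  by (intro teq_perm) auto

lemma hprod_heap: "hprod I (map (heap I) ws) = heap I (concat ws)"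
  by (induction ws) (auto simp: hprod_def hempty_def hcat_heap)

lemma hprod_ex: "set xs \<subseteq> range (heap I) \<Longrightarrow> \<exists>w. hprod I xs = heap I w"
proof (induction xs)
  case Nil then show ?case by (auto simp: hprod_def hempty_def)
next
  case (Cons x xs)
  then obtain w u where "hprod I xs = heap I w" "x = heap I u" by auto
  then show ?case by (auto simp: hprod_def hcat_heap)
qed

lemma hcat_empty: "hcat I (heap I u) (hempty I) = heap I u"
  by (simp add: hempty_def hcat_heap)
lemma empty_hcat: "hcat I (hempty I) (heap I u) = heap I u"
  by (simp add: hempty_def hcat_heap)

lemma hempties: "hprod I (map (\<lambda>_. hempty I) xs) = hempty I"
  by (induction xs) (auto simp: hprod_def hempty_def hcat_heap)

lemma cl_heaps: "c \<in> CS S I \<Longrightarrow> finite S \<Longrightarrow> cl I c \<in> heaps S I"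
proof -
  assume c: "c \<in> CS S I" and fin: "finite S"
  then have "finite c" using finite_subset by (auto simp: CS_def)
  then have "lof c \<in> lists S" using lof[of c] c by (auto simp: CS_def)
  then show "cl I c \<in> heaps S I" unfolding heaps_def cl_def by blast
qed

lemma cf_cl: assumes fin: "finite S" and c: "c \<in> CS S I" shows "cf S I (cl I c) = [cl I c]"
proof -
  have fc: "finite c" using c fin finite_subset by (auto simp: CS_def)
  note lc = lof[OF fc]
  have finCS: "finite c'" if "c' \<in> CS S I" for c' using that fin finite_subset by (auto simp: CS_def)
  show ?thesis unfolding cf_def
  proof (rule the_equality)
    show "set [cl I c] \<subseteq> cliques S I \<and> successively (arrow I) [cl I c] \<and> hprod I [cl I c] = cl I c"
      using cliques_iff[OF fin] c by (auto simp: hprod_def cl_def hcat_empty)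
  next
    fix cs assume H: "set cs \<subseteq> cliques S I \<and> successively (arrow I) cs \<and> hprod I cs = cl I c"
    show "cs = [cl I c]"
    proof (cases cs)
      case Nil
      then have "heap I [] = heap I (lof c)" using H by (simp add: hprod_def hempty_def cl_def)
      then have "mset [] = mset (lof c)" using heap_eq teq_mset by metis
      then have "c = {}" using lc by (metis mset.simps(1) mset_zero_iff set_empty)
      then show ?thesis using c by (simp add: CS_def)
    next
      case (Cons d rest)
      have "d \<in> cliques S I" using H Cons by auto
      then obtain c1 where c1: "c1 \<in> CS S I" "d = cl I c1" using cliques_iff[OF fin] by auto
      show ?thesis
      proof (cases rest)
        case Nil
        then have "hprod I cs = d" using Cons c1 by (simp add: hprod_def cl_def hcat_empty)
        then show ?thesis using H Cons Nil by simp
      next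
        case (Cons d2 rest')
        have "d2 \<in> cliques S I" using H Cons \<open>cs = d # rest\<close> by auto
        then obtain c2 where c2: "c2 \<in> CS S I" "d2 = cl I c2" using cliques_iff[OF fin] by auto
        have "set rest' \<subseteq> range (heap I)"
        proof
          fix x assume "x \<in> set rest'"
          then have "x \<in> cliques S I" using H Cons \<open>cs = d # rest\<close> by auto
          then show "x \<in> range (heap I)" using cliques_iff[OF fin] by (auto simp: cl_def)
        qed
        then obtain wr where wr: "hprod I rest' = heap I wr" using hprod_ex by blast
        have "hprod I cs = heap I (lof c1 @ lof c2 @ wr)"
          using Cons \<open>cs = d # rest\<close> c1 c2 wr by (simp add: hprod_def cl_def hcat_heap)
        then have "heap I (lof c1 @ lof c2 @ wr) = heap I (lof c)" using H by (simp add: cl_def)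
        then have "teq I (lof c1 @ lof c2 @ wr) (lof c)" by (simp only: heap_eq)
        then have ms: "mset (lof c1 @ lof c2 @ wr) = mset (lof c)" by (rule teq_mset)
        then have "distinct (lof c1 @ lof c2 @ wr)" using lc mset_eq_imp_distinct_iff by blast
        then have dis: "c1 \<inter> c2 = {}" using lof[OF finCS[OF c1(1)]] lof[OF finCS[OF c2(1)]] by auto
        have sub: "c1 \<subseteq> c" "c2 \<subseteq> c" using ms lc lof[OF finCS[OF c1(1)]] lof[OF finCS[OF c2(1)]]
          by (metis Un_iff set_append set_mset_mset subsetI)+
        have "arrow I d d2" using H Cons \<open>cs = d # rest\<close> by simp
        then have ar: "\<forall>b\<in>c2. \<exists>a\<in>c1. (a,b) \<notin> I"
          using c1 c2 by (simp add: arrow_def pieces_cl finCS)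
        obtain b where "b \<in> c2" using c2 by (auto simp: CS_def)
        then obtain a where a: "a \<in> c1" "(a,b) \<notin> I" using ar by auto
        have "a \<noteq> b" using dis a \<open>b \<in> c2\<close> by auto
        then have "(a,b) \<in> I" using c sub a \<open>b \<in> c2\<close> unfolding CS_def indep_def by blast
        then show ?thesis using a by simp
      qed
    qed
  qed
qed

lemma hprod_cfpad: assumes "finite S" "c \<in> CS S I"
  shows "hprod I (map (cf_pad S I (cl I c)) [0..<Suc m]) = cl I c"
proof -
  have "map (cf_pad S I (cl I c)) [0..<Suc m] = cl I c # map (\<lambda>_. hempty I) [Suc 0..<Suc m]"
    using cf_cl[OF assms] by (simp add: upt_conv_Cons cf_pad_def del: upt_Suc)
  moreover have hp_cons: "\<And>x xs. hprod I (x # xs) = hcat I x (hprod I xs)" by (simp add: hprod_def)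
  ultimately show ?thesis by (simp only: hp_cons hempties) (simp add: cl_def hcat_empty)
qed

lemma bnd_cl: assumes "\<xi> \<in> boundary S I" "finite S"
  shows "pieces (\<xi> k) \<in> CS S I \<and> \<xi> k = cl I (pieces (\<xi> k))"
proof -
  have "\<xi> k \<in> cliques S I" using assms by (auto simp: boundary_def)
  then obtain c where "c \<in> CS S I" "\<xi> k = cl I c" using cliques_iff[OF assms(2)] by auto
  moreover have "finite c" using calculation assms(2) finite_subset by (auto simp: CS_def)
  ultimately show ?thesis by (simp add: pieces_cl)
qed

lemma hprod_bnd: assumes "\<xi> \<in> boundary S I" "finite S"
  shows "hprod I (map \<xi> xs) = heap I (concat (map (\<lambda>k. lof (pieces (\<xi> k))) xs))"
proof -
  have eq: "map \<xi> xs = map (heap I) (map (\<lambda>k. lof (pieces (\<xi> k))) xs)"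
    unfolding map_map o_def by (rule map_cong[OF refl]) (metis bnd_cl[OF assms] cl_def)
  show ?thesis by (subst eq) (rule hprod_heap)
qed

lemma up_cl: assumes fin: "finite S" and c: "c \<in> CS S I"
  shows "up S I (cl I c) = {\<xi> \<in> boundary S I. c \<subseteq> pieces (\<xi> 0)}"
proof -
  have fc: "finite c" using c fin finite_subset by (auto simp: CS_def)
  note lc = lof[OF fc]
  have iff: "\<xi> \<in> up S I (cl I c) \<longleftrightarrow> c \<subseteq> pieces (\<xi> 0)" if xb: "\<xi> \<in> boundary S I" for \<xi>
  proof -
    define P where "P k = pieces (\<xi> k)" for k
    define W where "W k = lof (P k)" for k
    have PC: "P k \<in> CS S I" for k using bnd_cl[OF xb fin] P_def by auto
    have fP: "finite (P k)" for k using PC[of k] fin finite_subset unfolding CS_def by blast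
    have W: "distinct (W k) \<and> set (W k) = P k" for k using lof[OF fP] W_def by auto
    have hp: "hprod I (map \<xi> xs) = heap I (concat (map W xs))" for xs
    proof -
      have "W = (\<lambda>k. lof (pieces (\<xi> k)))" using W_def P_def by (intro ext) simp
      then show ?thesis using hprod_bnd[OF xb fin] by simp
    qed
    show ?thesis
    proof
      assume "\<xi> \<in> up S I (cl I c)"
      then have "hle S I (hprod I (map (cf_pad S I (cl I c)) [0..<Suc 0])) (hprod I (map \<xi> [0..<Suc 0]))"
        unfolding up_def by blast
      then have "hle S I (cl I c) (heap I (W 0))"
        using hprod_cfpad[OF fin c, of 0] hp[of "[0..<Suc 0]"] by simp
      then obtain z where z: "z \<in> heaps S I" "heap I (W 0) = hcat I (cl I c) z" unfolding hle_def by auto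
      then obtain v where "z = heap I v" unfolding heaps_def by auto
      then have "heap I (W 0) = heap I (lof c @ v)" using z by (simp add: cl_def hcat_heap)
      then have "set (W 0) = set (lof c @ v)" using heap_eq teq_set by metis
      then show "c \<subseteq> pieces (\<xi> 0)" using W[of 0] lc P_def by auto
    next
      assume sub: "c \<subseteq> pieces (\<xi> 0)"
      have "\<forall>n. hle S I (hprod I (map (cf_pad S I (cl I c)) [0..<n])) (hprod I (map \<xi> [0..<n]))"
      proof
        fix n
        show "hle S I (hprod I (map (cf_pad S I (cl I c)) [0..<n])) (hprod I (map \<xi> [0..<n]))"
        proof (cases n)
          case 0
          have "heap I [] \<in> heaps S I" unfolding heaps_def by auto
          then show ?thesis using 0
            unfolding hle_def hprod_def hempty_def by (intro bexI[of _ "heap I []"]) (auto simp: hcat_heap)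
        next
          case (Suc m)
          define rest where "rest = concat (map W [Suc 0..<Suc m])"
          have h1: "hprod I (map \<xi> [0..<n]) = heap I (W 0 @ rest)"
          proof -
            have "concat (map W [0..<Suc m]) = W 0 @ rest"
              by (simp add: rest_def upt_conv_Cons del: upt_Suc)
            then show ?thesis using hp[of "[0..<n]"] Suc by simp
          qed
          have "set rest \<subseteq> S" using W PC unfolding rest_def CS_def by auto
          moreover have "P 0 - c \<subseteq> S" using PC by (auto simp: CS_def)
          ultimately have "lof (P 0 - c) @ rest \<in> lists S" using lof[of "P 0 - c"] fP[of 0] by auto
          then have zh: "heap I (lof (P 0 - c) @ rest) \<in> heaps S I" unfolding heaps_def by auto
          have "teq I (W 0) (lof c @ lof (P 0 - c))"
          proof (rule teq_perm)
            show "distinct (W 0)" using W by auto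
            show "distinct (lof c @ lof (P 0 - c))" using lc lof[of "P 0 - c"] fP[of 0] by auto
            show "set (W 0) = set (lof c @ lof (P 0 - c))" using lc lof[of "P 0 - c"] fP[of 0] W[of 0] sub P_def by auto
            show "indep I (set (W 0))" using W[of 0] PC[of 0] by (simp add: CS_def)
          qed
          then have "teq I (W 0 @ rest) (lof c @ lof (P 0 - c) @ rest)" using teq_app_r by fastforce
          then have "heap I (W 0 @ rest) = hcat I (cl I c) (heap I (lof (P 0 - c) @ rest))"
            by (simp add: cl_def hcat_heap heap_eq)
          then show ?thesis using hprod_cfpad[OF fin c, of m] Suc h1 zh unfolding hle_def by auto
        qed
      qed
      then show "\<xi> \<in> up S I (cl I c)" unfolding up_def using xb by blast
    qed
  qed
  show ?thesis
  proof (rule Set.set_eqI)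
    fix \<xi>
    show "\<xi> \<in> up S I (cl I c) \<longleftrightarrow> \<xi> \<in> {\<xi> \<in> boundary S I. c \<subseteq> pieces (\<xi> 0)}"
    proof (cases "\<xi> \<in> boundary S I")
      case True then show ?thesis using iff[OF True] by simp
    next
      case False then show ?thesis by (simp add: up_def)
    qed
  qed
qed




lemma sr_one:
  fixes A :: "complex mat" and a :: "nat \<Rightarrow> nat \<Rightarrow> real" and x :: "nat \<Rightarrow> real"
  assumes A: "A = mat n n (\<lambda>(i,j). complex_of_real (a i j))" and n: "n>0"
  and a0: "\<And>i j. a i j \<ge> 0" and xpos: "\<And>i. i<n \<Longrightarrow> x i > 0"
  and eq: "\<And>i. i<n \<Longrightarrow> (\<Sum>j<n. a i j * x j) = x i"
  shows "spectral_radius A = 1"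
proof -
  have Ac: "A \<in> carrier_mat n n" using A by auto
  define v where "v = vec n (\<lambda>i. complex_of_real (x i))"
  have "eigenvector A v 1"
    unfolding eigenvector_def
  proof (intro conjI)
    show "v \<in> carrier_vec (dim_row A)" using A v_def by auto
    have "v $ 0 \<noteq> 0" using xpos[OF n] n v_def by auto
    then show "v \<noteq> 0\<^sub>v (dim_row A)" using A n by auto
    show "A *\<^sub>v v = 1 \<cdot>\<^sub>v v"
    proof (rule eq_vecI)
      show "dim_vec (A *\<^sub>v v) = dim_vec (1 \<cdot>\<^sub>v v)" using A v_def by auto
      fix i assume "i < dim_vec (1 \<cdot>\<^sub>v v)"
      then have i: "i < n" using v_def by auto
      have "(A *\<^sub>v v) $ i = (\<Sum>j<n. complex_of_real (a i j) * complex_of_real (x j))"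
        using A i v_def by (auto simp: scalar_prod_def lessThan_atLeast0 intro!: sum.cong)
      also have "\<dots> = complex_of_real (\<Sum>j<n. a i j * x j)" by simp
      also have "\<dots> = (1 \<cdot>\<^sub>v v) $ i" using eq[OF i] i v_def by simp
      finally show "(A *\<^sub>v v) $ i = (1 \<cdot>\<^sub>v v) $ i" .
    qed
  qed
  then have one: "1 \<in> spectrum A" unfolding spectrum_def eigenvalue_def by auto
  have le: "norm k \<le> 1" if k: "k \<in> spectrum A" for k
  proof -
    obtain w where w: "eigenvector A w k" using k unfolding spectrum_def eigenvalue_def by auto
    have wc: "w \<in> carrier_vec n" and wnz: "w \<noteq> 0\<^sub>v n" and Aw: "A *\<^sub>v w = k \<cdot>\<^sub>v w"
      using w A unfolding eigenvector_def by auto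
    define r where "r i = norm (w $ i) / x i" for i
    obtain i0 where i0: "i0 < n" and mx: "\<And>j. j < n \<Longrightarrow> r j \<le> r i0"
    proof -
      have "finite (r ` {..<n})" "r ` {..<n} \<noteq> {}" using n by auto
      then have "Max (r ` {..<n}) \<in> r ` {..<n}" by (rule Max_in)
      then obtain i0 where "i0 < n" "r i0 = Max (r ` {..<n})" by auto
      then show ?thesis using that by (metis Max_ge \<open>finite (r ` {..<n})\<close> image_eqI lessThan_iff)
    qed
    obtain j0 where j0: "j0 < n" "w $ j0 \<noteq> 0"
      using wnz wc by (metis eq_vecI carrier_vecD index_zero_vec(1) index_zero_vec(2))
    have "r j0 > 0" using j0 xpos unfolding r_def by auto
    then have rpos: "r i0 > 0" using mx[OF j0(1)] by auto
    have wi0: "norm (w $ i0) = r i0 * x i0" using xpos[OF i0] unfolding r_def by auto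
    have "k * w $ i0 = (A *\<^sub>v w) $ i0" using Aw i0 wc by auto
    also have "\<dots> = (\<Sum>j<n. complex_of_real (a i0 j) * w $ j)"
      using A i0 wc by (auto simp: scalar_prod_def lessThan_atLeast0 intro!: sum.cong)
    finally have e: "k * w $ i0 = (\<Sum>j<n. complex_of_real (a i0 j) * w $ j)" .
    have "norm k * (r i0 * x i0) = norm (k * w $ i0)" using wi0 by (simp add: norm_mult)
    also have "\<dots> \<le> (\<Sum>j<n. norm (complex_of_real (a i0 j) * w $ j))"
      unfolding e by (rule norm_sum)
    also have "\<dots> = (\<Sum>j<n. a i0 j * norm (w $ j))"
      using a0 by (simp add: norm_mult)
    also have "\<dots> \<le> (\<Sum>j<n. a i0 j * (r i0 * x j))"
    proof (rule sum_mono)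
      fix j assume "j \<in> {..<n}"
      then have j: "j < n" by auto
      have "norm (w $ j) = r j * x j" using xpos[OF j] unfolding r_def by auto
      also have "\<dots> \<le> r i0 * x j" using mx[OF j] xpos[OF j] by (simp add: mult_right_mono)
      finally show "a i0 j * norm (w $ j) \<le> a i0 j * (r i0 * x j)"
        using a0 by (simp add: mult_left_mono)
    qed
    also have "\<dots> = r i0 * (\<Sum>j<n. a i0 j * x j)"
      by (simp add: sum_distrib_left algebra_simps)
    also have "\<dots> = r i0 * x i0" using eq[OF i0] by simp
    finally have "norm k * (r i0 * x i0) \<le> 1 * (r i0 * x i0)" by simp
    moreover have "r i0 * x i0 > 0" using rpos xpos[OF i0] by auto
    ultimately show ?thesis by (meson mult_le_cancel_right_pos)
  qed
  have "spectral_radius A \<in> norm ` spectrum A" by (rule spectral_radius_mem_max(1)[OF Ac n])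
  then have "spectral_radius A \<le> 1" using le by auto
  moreover have "1 \<le> spectral_radius A"
    using spectral_radius_mem_max(2)[OF Ac n, of 1] one by force
  ultimately show ?thesis by simp
qed




lemma sum_nth_distinct: "distinct cs \<Longrightarrow> (\<Sum>j<length cs. g (cs ! j)) = (\<Sum>h\<in>set cs. g h)"
  using sum_list_sum_nth[of "map g cs"] sum_list_distinct_conv_sum_set[of cs g]
  by (simp add: lessThan_atLeast0)

theorem lemma4:
  fixes S :: "'a set" and I :: "('a \<times> 'a) set" and P :: "(nat \<Rightarrow> 'a list set) measure"
  assumes "finite S" and "card S \<ge> 2"
    and "I \<subseteq> S \<times> S" and "sym I" and "\<forall>a. (a, a) \<notin> I"
    and "\<forall>a\<in>S. \<forall>b\<in>S. (a, b) \<in> ((S \<times> S) - I)\<^sup>*"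
    and "bernoulli S I P"
  shows "spectral_radius (Bmat S I P) = 1"
proof -
  note fin = assms(1) and symI = assms(4) and irr = assms(5) and conn = assms(6)
  have ps: "prob_space P" and sp: "space P = boundary S I"
    and sets: "sets P = sigma_sets (boundary S I) (up S I ` heaps S I)"
    and mul: "\<forall>x\<in>heaps S I. \<forall>y\<in>heaps S I.
        measure P (up S I (hcat I x y)) = measure P (up S I x) * measure P (up S I y)"
    and pos: "\<forall>x\<in>heaps S I. measure P (up S I x) > 0"
    using assms(7) unfolding bernoulli_def by auto
  interpret prob_space P by (rule ps)
  have fCS: "finite (CS S I)" using fin by (rule finite_CS)
  have finc: "finite c" if "c \<in> CS S I" for c using that fin finite_subset unfolding CS_def by blast
  have upm: "up S I (cl I c) \<in> sets P" if "c \<in> CS S I" for c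
    unfolding sets using cl_heaps[OF that fin] by (auto intro: sigma_sets.Basic)
  define E where "E c = {\<xi> \<in> boundary S I. pieces (\<xi> 0) = c}" for c
  define q where "q c = measure P (E c)" for c
  define F where "F c = (\<Sum>c'\<in>{c'\<in>CS S I. c \<subseteq> c'}. q c')" for c
  define X where "X \<gamma> = (\<Sum>c\<in>{c\<in>CS S I. c \<subseteq> Dp S I \<gamma>}. q c)" for \<gamma>
  have P0: "pieces (\<xi> 0) \<in> CS S I" if "\<xi> \<in> boundary S I" for \<xi> using bnd_cl[OF that fin] by auto
  have Em: "E c \<in> sets P" if c: "c \<in> CS S I" for c
  proof -
    have "E c = up S I (cl I c) - (\<Union>c'\<in>{c'\<in>CS S I. c \<subset> c'}. up S I (cl I c'))"
    proof (rule Set.set_eqI)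
      fix \<xi>
      show "\<xi> \<in> E c \<longleftrightarrow> \<xi> \<in> up S I (cl I c) - (\<Union>c'\<in>{c'\<in>CS S I. c \<subset> c'}. up S I (cl I c'))"
      proof (cases "\<xi> \<in> boundary S I")
        case False then show ?thesis unfolding E_def using up_cl[OF fin c] by auto
      next
        case True
        have p0: "pieces (\<xi> 0) \<in> CS S I" using P0[OF True] .
        have "\<xi> \<in> up S I (cl I c') \<longleftrightarrow> c' \<subseteq> pieces (\<xi> 0)" if "c' \<in> CS S I" for c'
          using up_cl[OF fin that] True by auto
        then have "\<xi> \<in> up S I (cl I c) - (\<Union>c'\<in>{c'\<in>CS S I. c \<subset> c'}. up S I (cl I c'))
            \<longleftrightarrow> c \<subseteq> pieces (\<xi> 0) \<and> \<not> (\<exists>c'\<in>CS S I. c \<subset> c' \<and> c' \<subseteq> pieces (\<xi> 0))"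
          using c by blast
        also have "\<dots> \<longleftrightarrow> pieces (\<xi> 0) = c" using p0 by blast
        finally show ?thesis unfolding E_def using True by auto
      qed
    qed
    moreover have "(\<Union>c'\<in>{c'\<in>CS S I. c \<subset> c'}. up S I (cl I c')) \<in> sets P"
      using fCS upm by (intro sets.finite_UN) auto
    ultimately show ?thesis using upm[OF c] by auto
  qed
  have Ef: "measure P (up S I (cl I c)) = F c" if c: "c \<in> CS S I" for c
  proof -
    have "up S I (cl I c) = (\<Union>c'\<in>{c'\<in>CS S I. c \<subseteq> c'}. E c')"
      unfolding E_def using up_cl[OF fin c] P0 by auto
    moreover have "measure P (\<Union>c'\<in>{c'\<in>CS S I. c \<subseteq> c'}. E c') = (\<Sum>c'\<in>{c'\<in>CS S I. c \<subseteq> c'}. measure P (E c'))"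
      using fCS Em by (intro finite_measure_finite_Union) (auto simp: disjoint_family_on_def E_def)
    ultimately show ?thesis by (simp add: F_def q_def)
  qed
  have qsum: "(\<Sum>c\<in>CS S I. q c) = 1"
  proof -
    have "boundary S I = (\<Union>c\<in>CS S I. E c)" unfolding E_def using P0 by auto
    moreover have "measure P (\<Union>c\<in>CS S I. E c) = (\<Sum>c\<in>CS S I. measure P (E c))"
      using fCS Em by (intro finite_measure_finite_Union) (auto simp: disjoint_family_on_def E_def)
    ultimately show ?thesis using prob_space sp by (simp add: q_def)
  qed
  have q0: "\<forall>c\<in>CS S I. q c \<ge> 0" by (simp add: q_def)
  have Fpos: "\<forall>c\<in>CS S I. F c > 0" using Ef pos cl_heaps fin by metis
  have Fmul: "\<forall>\<gamma>\<in>CS S I. \<forall>A\<in>CS S I. A \<subseteq> Rp S I \<gamma> \<longrightarrow> F (\<gamma> \<union> A) = F \<gamma> * F A"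
  proof (intro ballI impI)
    fix \<gamma> A assume g: "\<gamma> \<in> CS S I" and A: "A \<in> CS S I" and R: "A \<subseteq> Rp S I \<gamma>"
    have dis: "\<gamma> \<inter> A = {}" using R irr by (auto simp: Rp_def)
    have ind: "indep I (\<gamma> \<union> A)" using g A R symI unfolding CS_def indep_def Rp_def
      by (auto dest: symD)
    have gA: "\<gamma> \<union> A \<in> CS S I" using g A ind by (auto simp: CS_def)
    have "F (\<gamma> \<union> A) = measure P (up S I (cl I (\<gamma> \<union> A)))" using Ef[OF gA] by simp
    also have "cl I (\<gamma> \<union> A) = hcat I (cl I \<gamma>) (cl I A)"
      using hcat_cl[OF finc[OF g] finc[OF A] dis ind] by simp
    also have "measure P (up S I \<dots>) = measure P (up S I (cl I \<gamma>)) * measure P (up S I (cl I A))"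
      using mul cl_heaps[OF g fin] cl_heaps[OF A fin] by blast
    finally show "F (\<gamma> \<union> A) = F \<gamma> * F A" using Ef g A by simp
  qed
  have main: "\<forall>\<gamma>\<in>CS S I. X \<gamma> > 0"
    "\<forall>\<gamma>\<in>CS S I. (\<Sum>\<gamma>'\<in>{\<gamma>'\<in>CS S I. \<gamma>' \<subseteq> Dp S I \<gamma>}. F \<gamma>' * X \<gamma>') = X \<gamma>"
    using comb_main[OF fin symI irr conn q0 qsum F_def Fpos Fmul X_def] by auto
  define cs where "cs = clique_enum S I"
  have fcl: "finite (cliques S I)"
  proof -
    have "cliques S I = cl I ` CS S I" using cliques_iff[OF fin] by auto
    then show ?thesis using fCS by simp
  qed
  have csd: "distinct cs \<and> set cs = cliques S I"
    unfolding cs_def clique_enum_def using finite_distinct_list[OF fcl]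
    by (metis (mono_tags, lifting) someI_ex)
  define n where "n = length cs"
  have csi: "pieces (cs ! i) \<in> CS S I \<and> cs ! i = cl I (pieces (cs ! i))" if "i < n" for i
  proof -
    have "cs ! i \<in> cliques S I" using csd that n_def nth_mem by blast
    then obtain c where "c \<in> CS S I" "cs ! i = cl I c" using cliques_iff[OF fin] by auto
    moreover have "pieces (cl I c) = c" using pieces_cl finc calculation(1) by blast
    ultimately show ?thesis by simp
  qed
  obtain a0 where a0: "a0 \<in> S" using assms(2) by (metis card.empty ex_in_conv not_numeral_le_zero)
  have "{a0} \<in> CS S I" using a0 by (auto simp: CS_def indep_def)
  then have "cl I {a0} \<in> cliques S I" using cliques_iff[OF fin] by auto
  then have npos: "n > 0" using csd n_def by (metis empty_iff length_greater_0_conv set_empty)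
  define a where "a i j = (if arrow I (cs ! i) (cs ! j) then measure P (up S I (cs ! j)) else 0)" for i j
  define x where "x i = X (pieces (cs ! i))" for i
  have B: "Bmat S I P = mat n n (\<lambda>(i,j). complex_of_real (a i j))"
    unfolding Bmat_def Let_def cs_def[symmetric] n_def a_def
    by (intro cong_mat) auto
  show ?thesis
  proof (rule sr_one[OF B npos])
    show "\<And>i j. a i j \<ge> 0" by (simp add: a_def)
    show "\<And>i. i < n \<Longrightarrow> x i > 0" using main(1) csi x_def by auto
    fix i assume i: "i < n"
    let ?\<gamma> = "pieces (cs ! i)"
    define g where "g h = (if arrow I (cs ! i) h then measure P (up S I h) else 0) * X (pieces h)" for h
    have "(\<Sum>j<n. a i j * x j) = (\<Sum>j<length cs. g (cs ! j))"
      by (simp add: n_def a_def x_def g_def)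
    also have "\<dots> = (\<Sum>h\<in>cliques S I. g h)" using sum_nth_distinct[of cs g] csd by simp
    also have "cliques S I = cl I ` CS S I" using cliques_iff[OF fin] by auto
    also have "(\<Sum>h\<in>cl I ` CS S I. g h) = (\<Sum>c\<in>CS S I. g (cl I c))"
    proof -
      have inj: "inj_on (cl I) (CS S I)" by (metis inj_onI pieces_cl finc)
      show ?thesis using sum.reindex[OF inj, of g] by (simp add: o_def)
    qed
    also have "\<dots> = (\<Sum>c\<in>CS S I. if c \<subseteq> Dp S I ?\<gamma> then F c * X c else 0)"
    proof (rule sum.cong[OF refl])
      fix c assume c: "c \<in> CS S I"
      have "arrow I (cs ! i) (cl I c) \<longleftrightarrow> c \<subseteq> Dp S I ?\<gamma>"
        using c finc[OF c] csi[OF i] unfolding arrow_def Dp_def CS_def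
        by (auto simp: pieces_cl)
      then show "g (cl I c) = (if c \<subseteq> Dp S I ?\<gamma> then F c * X c else 0)"
        unfolding g_def using Ef[OF c] pieces_cl[OF finc[OF c]] by simp
    qed
    also have "\<dots> = (\<Sum>c\<in>{c\<in>CS S I. c \<subseteq> Dp S I ?\<gamma>}. F c * X c)"
      by (simp add: sum.inter_filter[OF fCS])
    also have "\<dots> = x i" using main(2) csi[OF i] x_def by simp
    finally show "(\<Sum>j<n. a i j * x j) = x i" .
  qed
qed


end
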